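(* Let $0 < q < 1$ be real and let $d \geq 3$, $1 \leq r < \frac d2$ be integers. Let $E_1, E_2, \dots$ be independent events with $\mathbf{P}(E_j) = \frac{q^j}{1+q^j}$, let $F_j$ be the complement of $E_j$, and write $E_n^k := E_{nd+k}$, $F_n^k := F_{nd+k}$ (juxtaposition of events denotes intersection). Define \begin{align*} U_{d,r} &:= \bigcap_{n\geq0}\left(E_n^r F_n^{d-r} F_{n+1}^0 \cup F_n^r\right)\left(E_n^{d-r} F_{n+1}^0 F_{n+1}^r \cup F_n^{d-r}\right)\left(E_{n+1}^0 F_{n+1}^r F_{n+1}^{d-r} F_{n+2}^0 \cup F_{n+1}^0\right),\\ V_{d,r} &:= \bigcap_{n\geq1}\left(E_n^r F_n^{d-r} F_{n+1}^0 \cup F_n^r\right)\left(E_n^{d-r} F_{n+1}^0 F_{n+1}^r \cup F_n^{d-r}\right)\left(E_{n+1}^0 F_{n+1}^r F_{n+1}^{d-r} F_{n+2}^0 \cup F_{n+1}^0\right). \end{align*} Then (1) $\displaystyle \mathbf{P}(U_{d,r} \mid V_{d,r}) = \frac{1}{(1+q^r)(1+q^{d-r})(1+q^d)} \cdot \frac{1}{g_3\left(-q^r;q^d\right)}$; (2) $\mathbf{P}(F_r \cap F_{d-r} \cap F_d \mid U_{d,r}) = g_3\left(-q^r; q^d\right)$.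
   Context: $(a;q)_n := \prod_{j=0}^{n-1}(1-aq^j)$ and $g_3(x;q) := \sum_{n\geq0}\frac{q^{n(n+1)}}{(x;q)_{n+1}(x^{-1}q;q)_{n+1}}$ is Hickerson's universal mock theta function. *)

theory Defs
  imports "HOL-Probability.Probability"
begin

definition qpoch :: "'a::real_normed_field \<Rightarrow> 'a \<Rightarrow> nat \<Rightarrow> 'a" where
  "qpoch a q n = (\<Prod>j<n. 1 - a * q ^ j)"

definition g3 :: "'a::{real_normed_field,banach} \<Rightarrow> 'a \<Rightarrow> 'a" where
  "g3 x q = (\<Sum>n. q ^ (n * (n + 1)) /
      (qpoch x q (n + 1) * qpoch (inverse x * q) q (n + 1)))"

text \<open>Given events E (indexed from 1) in the probability space M,
  Ev d E n k = E_n^k = E_{nd+k}, Fv d E n k = F_n^k its complement.\<close>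
definition Ev :: "nat \<Rightarrow> (nat \<Rightarrow> 'a set) \<Rightarrow> nat \<Rightarrow> nat \<Rightarrow> 'a set" where
  "Ev d E n k = E (n * d + k)"

definition Fv :: "'a measure \<Rightarrow> nat \<Rightarrow> (nat \<Rightarrow> 'a set) \<Rightarrow> nat \<Rightarrow> nat \<Rightarrow> 'a set" where
  "Fv M d E n k = space M - E (n * d + k)"

definition blk :: "'a measure \<Rightarrow> nat \<Rightarrow> nat \<Rightarrow> (nat \<Rightarrow> 'a set) \<Rightarrow> nat \<Rightarrow> 'a set" where
  "blk M d r E n =
     ((Ev d E n r \<inter> Fv M d E n (d - r) \<inter> Fv M d E (n + 1) 0) \<union> Fv M d E n r)
   \<inter> ((Ev d E n (d - r) \<inter> Fv M d E (n + 1) 0 \<inter> Fv M d E (n + 1) r) \<union> Fv M d E n (d - r))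
   \<inter> ((Ev d E (n + 1) 0 \<inter> Fv M d E (n + 1) r \<inter> Fv M d E (n + 1) (d - r)
        \<inter> Fv M d E (n + 2) 0) \<union> Fv M d E (n + 1) 0)"

definition Uset :: "'a measure \<Rightarrow> nat \<Rightarrow> nat \<Rightarrow> (nat \<Rightarrow> 'a set) \<Rightarrow> 'a set" where
  "Uset M d r E = space M \<inter> (\<Inter>n. blk M d r E n)"

definition Vset :: "'a measure \<Rightarrow> nat \<Rightarrow> nat \<Rightarrow> (nat \<Rightarrow> 'a set) \<Rightarrow> 'a set" where
  "Vset M d r E = space M \<inter> (\<Inter>n\<in>{1..}. blk M d r E n)"

definition cond_prob :: "'a measure \<Rightarrow> 'a set \<Rightarrow> 'a set \<Rightarrow> real" where
  "cond_prob M A B = measure M (A \<inter> B) / measure M B"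

end

theory Submission
  imports Defs
begin


definition qN :: "real \<Rightarrow> real \<Rightarrow> nat \<Rightarrow> real" where
  "qN Q z n = (\<Prod>j<n. 1 - z * Q ^ j)"
definition qD :: "real \<Rightarrow> nat \<Rightarrow> real" where
  "qD Q n = (\<Prod>j<n. 1 - Q ^ Suc j)"
definition qB :: "real \<Rightarrow> real \<Rightarrow> real \<Rightarrow> real \<Rightarrow> nat \<Rightarrow> real" where
  "qB x y Q z n = (\<Prod>j<n. (1 + x * z * Q ^ j) * (1 + y * z * Q ^ j))"
definition phi :: "real \<Rightarrow> real \<Rightarrow> real \<Rightarrow> real \<Rightarrow> nat \<Rightarrow> real" where
  "phi x y Q z n = Q ^ (n * n) * z ^ n * qN Q z n / (qD Q n * qB x y Q z n)"
definition Phi :: "real \<Rightarrow> real \<Rightarrow> real \<Rightarrow> real \<Rightarrow> real" where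
  "Phi x y Q z = suminf (phi x y Q z)"
definition domq :: "real \<Rightarrow> nat \<Rightarrow> real" where
  "domq Q n = Q ^ (n * n) / (1 - Q) ^ n"

lemma qN_Suc: "qN Q z (Suc n) = qN Q z n * (1 - z * Q ^ n)"
  by (simp add: qN_def)
lemma qN_shift: "qN Q z (Suc n) = (1 - z) * qN Q (Q * z) n"
  unfolding qN_def by (subst prod.lessThan_Suc_shift) (simp add: algebra_simps)
lemma qD_Suc: "qD Q (Suc n) = qD Q n * (1 - Q * Q ^ n)"
  by (simp add: qD_def)
lemma qB_Suc: "qB x y Q z (Suc n) = qB x y Q z n * ((1 + x * z * Q ^ n) * (1 + y * z * Q ^ n))"
  by (simp add: qB_def)
lemma qB_shift: "qB x y Q z (Suc n) = ((1 + x * z) * (1 + y * z)) * qB x y Q (Q * z) n"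
  unfolding qB_def by (subst prod.lessThan_Suc_shift) (simp add: algebra_simps)

lemma qN_bounds: assumes "0 \<le> Q" "Q < 1" "0 \<le> z" "z \<le> 1"
  shows "0 \<le> qN Q z n" "qN Q z n \<le> 1"
proof -
  have h: "0 \<le> 1 - z * Q ^ j \<and> 1 - z * Q ^ j \<le> 1" for j
  proof -
    have "Q ^ j \<le> 1" using assms by (simp add: power_le_one)
    hence "z * Q ^ j \<le> 1" using assms by (simp add: mult_le_one)
    moreover have "0 \<le> z * Q ^ j" using assms by simp
    ultimately show ?thesis by simp
  qed
  show "0 \<le> qN Q z n" unfolding qN_def using h by (simp add: prod_nonneg)
  show "qN Q z n \<le> 1" unfolding qN_def using h by (simp add: prod_le_1)
qed

lemma qD_bound: assumes "0 \<le> Q" "Q < 1"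
  shows "(1 - Q) ^ n \<le> qD Q n" "0 < qD Q n"
proof -
  have h: "0 \<le> 1 - Q \<and> 1 - Q \<le> 1 - Q ^ Suc j" for j
  proof -
    have "Q ^ Suc j \<le> Q" using assms by (simp add: power_le_one mult_left_le)
    thus ?thesis using assms by simp
  qed
  have "(\<Prod>j<n. 1 - Q) \<le> qD Q n" unfolding qD_def by (rule prod_mono) (use h in auto)
  thus "(1 - Q) ^ n \<le> qD Q n" by simp
  moreover have "0 < (1 - Q) ^ n" using assms by simp
  ultimately show "0 < qD Q n" by linarith
qed

lemma qB_bound: assumes "0 \<le> Q" "0 \<le> x" "0 \<le> y" "0 \<le> z"
  shows "1 \<le> qB x y Q z n"
proof -
  have "1 \<le> (1 + x * z * Q ^ j) * (1 + y * z * Q ^ j)" for j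
  proof -
    have a: "0 \<le> x * z * Q ^ j" and b: "0 \<le> y * z * Q ^ j" using assms by auto
    have "(1 + x * z * Q ^ j) * (1 + y * z * Q ^ j) = 1 + x * z * Q ^ j + y * z * Q ^ j
      + (x * z * Q ^ j) * (y * z * Q ^ j)" by (simp add: algebra_simps)
    thus ?thesis using a b mult_nonneg_nonneg[OF a b] by linarith
  qed
  thus ?thesis unfolding qB_def by (intro prod_ge_1) simp
qed

lemma phi_bounds: assumes "0 \<le> Q" "Q < 1" "0 \<le> z" "z \<le> 1" "0 \<le> x" "0 \<le> y"
  shows "0 \<le> phi x y Q z n" "phi x y Q z n \<le> domq Q n"
proof -
  note N = qN_bounds[OF assms(1-4), of n] and D = qD_bound[OF assms(1,2), of n]
    and B = qB_bound[OF assms(1,5,6,3), of n]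
  have zn: "0 \<le> z ^ n" "z ^ n \<le> 1" using assms by (simp_all add: power_le_one)
  have qn: "0 \<le> Q ^ (n * n)" using assms by simp
  have zq0: "0 \<le> z ^ n * qN Q z n" using zn N by simp
  have zq1: "z ^ n * qN Q z n \<le> 1" using zn N by (intro mult_le_one) auto
  have num0: "0 \<le> Q ^ (n * n) * z ^ n * qN Q z n" using qn zq0 by (simp add: mult.assoc)
  have num1: "Q ^ (n * n) * z ^ n * qN Q z n \<le> Q ^ (n * n)"
    using mult_left_mono[OF zq1 qn] by (simp add: mult.assoc)
  have den0: "0 < qD Q n * qB x y Q z n" using D B by simp
  have "qD Q n * 1 \<le> qD Q n * qB x y Q z n" using B D by (intro mult_left_mono) auto
  hence den1: "(1 - Q) ^ n \<le> qD Q n * qB x y Q z n" using D by linarith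
  have p1: "0 < (1 - Q) ^ n" using assms by simp
  show "0 \<le> phi x y Q z n" unfolding phi_def using num0 den0 by simp
  show "phi x y Q z n \<le> domq Q n" unfolding phi_def domq_def
    by (rule frac_le[OF qn num1 p1 den1])
qed

lemma dom_summable: assumes "0 \<le> Q" "Q < 1" shows "summable (domq Q)"
proof -
  have "(\<lambda>n. Q ^ n / (1 - Q)) \<longlonglongrightarrow> 0 / (1 - Q)"
    by (intro tendsto_divide LIMSEQ_power_zero tendsto_const) (use assms in auto)
  from LIMSEQ_D[OF this, of "1/2"] obtain N where
    N: "\<And>n. n \<ge> N \<Longrightarrow> \<bar>Q ^ n / (1 - Q)\<bar> < 1/2"
    by auto
  show ?thesis
  proof (rule summable_comparison_test')
    show "summable (\<lambda>n. (1/2::real) ^ n)" by simp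
    fix n assume n: "N \<le> n"
    have "domq Q n = (Q ^ n / (1 - Q)) ^ n" unfolding domq_def
      by (simp add: power_divide power_mult)
    also have "\<dots> \<le> (1/2) ^ n" using N[OF n] assms
      by (intro power_mono) auto
    finally show "norm (domq Q n) \<le> (1/2) ^ n" using assms unfolding domq_def by simp
  qed
qed

lemma poly_id:
  fixes x y z w Q :: real
  assumes "Q = x * y"
  shows "(1-z)*((1+x*Q*z*w)*(1+y*Q*z*w)) - (1+x*z+y*z)*Q*w*(1-Q*z*w) - (1-Q*z*w)*(1-Q*w)
       = w^2*Q^3*z^2*(1-Q*z*w) - z*(1-Q*w)*((1+x*Q*z*w)*(1+y*Q*z*w))"
  using assms by (simp add: algebra_simps power2_eq_square power3_eq_cube)

lemma small_id:
  fixes x y z w Q b0 bs :: real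
  assumes Qd: "Q = x * y" and bsd: "bs = (1+x*Q*z*w)*(1+y*Q*z*w)"
    and nz: "1 - Q*w \<noteq> 0" "b0 \<noteq> 0" "bs \<noteq> 0"
  shows "Q*z*(1-z)/((1-Q*w)*b0)
    - (1+x*z+y*z)/b0 * (Q*(Q*z*w)*(1-Q*z*w)/((1-Q*w)*bs))
    - Q*z*(1-Q*z*w)/(b0*bs)
    = w^2*Q^4*z^3*(1-Q*z*w)/((1-Q*w)*b0*bs) - Q*z^2/b0"
proof -
  define D where "D = (1-Q*w)*b0*bs"
  have D: "D \<noteq> 0" using nz by (auto simp: D_def)
  have e1: "Q*z*(1-z)/((1-Q*w)*b0) * D = Q*z*(1-z)*bs"
    using nz by (simp add: D_def field_simps)
  have e2: "(1+x*z+y*z)/b0 * (Q*(Q*z*w)*(1-Q*z*w)/((1-Q*w)*bs)) * D = (1+x*z+y*z)*(Q*(Q*z*w)*(1-Q*z*w))"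
    using nz by (simp add: D_def field_simps)
  have e3: "Q*z*(1-Q*z*w)/(b0*bs) * D = Q*z*(1-Q*z*w)*(1-Q*w)"
    using nz by (simp add: D_def field_simps)
  have e4: "w^2*Q^4*z^3*(1-Q*z*w)/((1-Q*w)*b0*bs) * D = w^2*Q^4*z^3*(1-Q*z*w)"
    using nz by (simp add: D_def field_simps)
  have e5: "Q*z^2/b0 * D = Q*z^2*(1-Q*w)*bs"
    using nz by (simp add: D_def field_simps)
  have p: "(1-z)*bs - (1+x*z+y*z)*Q*w*(1-Q*z*w) - (1-Q*z*w)*(1-Q*w)
       = w^2*Q^3*z^2*(1-Q*z*w) - z*(1-Q*w)*bs"
    unfolding bsd by (rule poly_id[OF Qd])
  have "(Q*z*(1-z)/((1-Q*w)*b0) - (1+x*z+y*z)/b0 * (Q*(Q*z*w)*(1-Q*z*w)/((1-Q*w)*bs))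
      - Q*z*(1-Q*z*w)/(b0*bs)) * D
      = Q*z*(1-z)*bs - (1+x*z+y*z)*(Q*(Q*z*w)*(1-Q*z*w)) - Q*z*(1-Q*z*w)*(1-Q*w)"
    using e1 e2 e3 by (simp only: left_diff_distrib)
  also have "\<dots> = Q*z*((1-z)*bs - (1+x*z+y*z)*Q*w*(1-Q*z*w) - (1-Q*z*w)*(1-Q*w))"
    by (simp add: algebra_simps)
  also have "\<dots> = Q*z*(w^2*Q^3*z^2*(1-Q*z*w) - z*(1-Q*w)*bs)" using p by simp
  also have "\<dots> = w^2*Q^4*z^3*(1-Q*z*w) - Q*z^2*(1-Q*w)*bs"
    by (simp add: algebra_simps power2_eq_square power3_eq_cube power4_eq_xxxx)
  also have "\<dots> = (w^2*Q^4*z^3*(1-Q*z*w)/((1-Q*w)*b0*bs) - Q*z^2/b0) * D"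
    using e4 e5 by (simp only: left_diff_distrib)
  finally show ?thesis using mult_right_cancel[OF D] by blast
qed

definition Fz :: "real \<Rightarrow> real \<Rightarrow> real \<Rightarrow> real \<Rightarrow> nat \<Rightarrow> real" where
  "Fz x y Q z n = (if n = 0 then 0 else
     Q ^ (n * n) * z ^ Suc n * qN Q (Q * z) (n - 1) / (qD Q (n - 1) * qB x y Q z n))"

lemma Fz_Suc: "Fz x y Q z (Suc n) =
     Q ^ (Suc n * Suc n) * z ^ Suc (Suc n) * qN Q (Q * z) n / (qD Q n * qB x y Q z (Suc n))"
  by (simp add: Fz_def)

lemma term_suc:
  assumes Qd: "Q = x * y" and pos: "0 < x" "0 < y" "Q < 1" "0 \<le> z" "z \<le> 1"
  shows "phi x y Q z (Suc m) - (1+x*z+y*z)/((1+x*z)*(1+y*z)) * phi x y Q (Q*z) (Suc m)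
     - Q*z*(1-Q*z)/((1+x*z)*(1+y*z)*((1+x*(Q*z))*(1+y*(Q*z)))) * phi x y Q (Q*(Q*z)) m
     = Fz x y Q z (Suc (Suc m)) - Fz x y Q z (Suc m)"
proof -
  have Q0: "0 < Q" using Qd pos by simp
  define w where "w = Q ^ m"
  define pp where "pp = Q ^ (m * m)"
  define zz where "zz = z ^ m"
  define kk where "kk = qN Q (Q * z) m"
  define dd where "dd = qD Q m"
  define bb where "bb = qB x y Q (Q * z) m"
  define b0 where "b0 = (1+x*z)*(1+y*z)"
  define bs where "bs = (1+x*Q*z*w)*(1+y*Q*z*w)"
  define bq where "bq = (1+x*(Q*z))*(1+y*(Q*z))"
  define T where "T = pp*zz*kk*w^2/(dd*bb)"
  have w0: "0 < w" "w \<le> 1" using Q0 pos by (auto simp: w_def power_le_one)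
  have "Q * w \<le> Q" using mult_left_mono[OF w0(2)] Q0 by simp
  hence Qw: "Q * w < 1" using pos by linarith
  have "Q * z \<le> Q" using mult_left_mono[OF pos(5)] Q0 by simp
  hence Qz: "Q * z < 1" using pos by linarith
  have dd0: "0 < dd" unfolding dd_def using qD_bound Q0 pos by auto
  have bb0: "1 \<le> bb" unfolding bb_def using qB_bound Q0 pos by auto
  have b00: "0 < b0" unfolding b0_def using pos by (intro mult_pos_pos add_pos_nonneg) auto
  have bs0: "0 < bs" unfolding bs_def using pos Q0 w0 by (intro mult_pos_pos add_pos_nonneg) auto
  have bq0: "0 < bq" unfolding bq_def using pos Q0 by (intro mult_pos_pos add_pos_nonneg) auto
  have N1: "qN Q z (Suc m) = (1 - z) * kk" by (simp add: kk_def qN_shift)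
  have N2: "qN Q (Q*z) (Suc m) = kk * (1 - Q*z*w)" by (simp add: kk_def w_def qN_Suc mult.assoc)
  have N3: "qN Q (Q*(Q*z)) m = kk * (1 - Q*z*w) / (1 - Q*z)"
    using qN_shift[of Q "Q*z" m] N2 Qz by (simp add: field_simps)
  have D1: "qD Q (Suc m) = dd * (1 - Q*w)" by (simp add: dd_def w_def qD_Suc)
  have B1: "qB x y Q z (Suc m) = b0 * bb" by (simp add: b0_def bb_def qB_shift)
  have B2: "qB x y Q (Q*z) (Suc m) = bb * bs"
    by (simp add: bb_def bs_def w_def qB_Suc mult.assoc mult.left_commute)
  have B3: "qB x y Q (Q*(Q*z)) m = bb * bs / bq"
    using qB_shift[of x y Q "Q*z" m] B2 bq0 by (simp add: bq_def field_simps)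
  have B4: "qB x y Q z (Suc (Suc m)) = b0 * bb * bs"
    using qB_shift[of x y Q z "Suc m"] B2 by (simp add: b0_def mult.assoc)
  have e1: "Suc m * Suc m = m * m + (m + m) + 1" by simp
  have P1: "Q ^ (Suc m * Suc m) = pp * w^2 * Q"
    by (subst e1) (simp add: power_add pp_def w_def power2_eq_square)
  have e2: "Suc (Suc m) * Suc (Suc m) = m * m + m * 4 + 4" by simp
  have P2: "Q ^ (Suc (Suc m) * Suc (Suc m)) = pp * w^4 * Q^4"
    by (subst e2, simp only: power_add power_mult pp_def w_def)
  have Z1: "z ^ Suc m = zz * z" by (simp add: zz_def)
  have Z2: "z ^ Suc (Suc m) = zz * z^2" by (simp add: zz_def power2_eq_square)
  have Z3: "z ^ Suc (Suc (Suc m)) = zz * z^3" by (simp add: zz_def power3_eq_cube)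
  have Z4: "(Q*z) ^ Suc m = Q*z*w*zz" by (simp add: zz_def w_def power_mult_distrib)
  have Z5: "(Q*(Q*z)) ^ m = w*w*zz" by (simp add: zz_def w_def power_mult_distrib)
  have nz: "dd \<noteq> 0" "bb \<noteq> 0" "b0 \<noteq> 0" "bs \<noteq> 0" "bq \<noteq> 0" "1 - Q*w \<noteq> 0" "1 - Q*z \<noteq> 0"
    using dd0 bb0 b00 bs0 bq0 Qw Qz by auto
  have A1: "phi x y Q z (Suc m) = T * (Q*z*(1-z)/((1-Q*w)*b0))"
    unfolding phi_def P1 Z1 N1 D1 B1 T_def using nz by (simp add: field_simps power2_eq_square)
  have A2: "phi x y Q (Q*z) (Suc m) = T * (Q*(Q*z*w)*(1-Q*z*w)/((1-Q*w)*bs))"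
    unfolding phi_def P1 Z4 N2 D1 B2 T_def using nz by (simp add: field_simps power2_eq_square)
  have A3: "Q*z*(1-Q*z)/(b0*bq) * phi x y Q (Q*(Q*z)) m
      = T * (Q*z*(1-Q*z*w)/(b0*bs))"
    unfolding phi_def Z5 N3 B3 T_def pp_def[symmetric] dd_def[symmetric]
    using nz by (simp add: field_simps power2_eq_square)
  have F2: "Fz x y Q z (Suc (Suc m)) = T * (w^2*Q^4*z^3*(1-Q*z*w)/((1-Q*w)*b0*bs))"
    unfolding Fz_Suc P2 Z3 N2 D1 B4 T_def using nz by (simp add: field_simps power2_eq_square power4_eq_xxxx)
  have F1: "Fz x y Q z (Suc m) = T * (Q*z^2/b0)"
    unfolding Fz_Suc P1 Z2 T_def kk_def[symmetric] dd_def[symmetric] B1 using nz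
    by (simp add: field_simps power2_eq_square)
  have S: "Q*z*(1-z)/((1-Q*w)*b0)
    - (1+x*z+y*z)/b0 * (Q*(Q*z*w)*(1-Q*z*w)/((1-Q*w)*bs))
    - Q*z*(1-Q*z*w)/(b0*bs)
    = w^2*Q^4*z^3*(1-Q*z*w)/((1-Q*w)*b0*bs) - Q*z^2/b0"
    by (rule small_id[OF Qd bs_def]) (use nz in auto)
  have "phi x y Q z (Suc m) - (1+x*z+y*z)/((1+x*z)*(1+y*z)) * phi x y Q (Q*z) (Suc m)
     - Q*z*(1-Q*z)/((1+x*z)*(1+y*z)*((1+x*(Q*z))*(1+y*(Q*z)))) * phi x y Q (Q*(Q*z)) m
     = T * (Q*z*(1-z)/((1-Q*w)*b0)
    - (1+x*z+y*z)/b0 * (Q*(Q*z*w)*(1-Q*z*w)/((1-Q*w)*bs))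
    - Q*z*(1-Q*z*w)/(b0*bs))"
    unfolding b0_def[symmetric] bq_def[symmetric] unfolding A1 A2 A3 by (simp add: algebra_simps)
  also have "\<dots> = T * (w^2*Q^4*z^3*(1-Q*z*w)/((1-Q*w)*b0*bs) - Q*z^2/b0)" using S by simp
  also have "\<dots> = Fz x y Q z (Suc (Suc m)) - Fz x y Q z (Suc m)"
    unfolding F1 F2 by (simp add: algebra_simps)
  finally show ?thesis .
qed

lemma phi_summable: assumes "0 \<le> Q" "Q < 1" "0 \<le> z" "z \<le> 1" "0 \<le> x" "0 \<le> y"
  shows "summable (phi x y Q z)"
proof (rule summable_comparison_test[OF _ dom_summable[OF assms(1,2)]])
  show "\<exists>N. \<forall>n\<ge>N. norm (phi x y Q z n) \<le> domq Q n"
    using phi_bounds[OF assms] by auto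
qed

lemma Fz_bounds: assumes "0 \<le> Q" "Q < 1" "0 \<le> z" "z \<le> 1" "0 \<le> x" "0 \<le> y"
  shows "0 \<le> Fz x y Q z n" "Fz x y Q z n \<le> domq Q n"
proof -
  have "0 \<le> Fz x y Q z n \<and> Fz x y Q z n \<le> domq Q n"
  proof (cases n)
    case 0
    then show ?thesis by (simp add: Fz_def domq_def)
  next
    case (Suc m)
    have Qz: "0 \<le> Q * z" "Q * z \<le> 1" using assms by (auto simp: mult_le_one)
    note N = qN_bounds[OF assms(1,2) Qz, of m] and D = qD_bound[OF assms(1,2), of m]
      and B = qB_bound[OF assms(1,5,6,3), of "Suc m"]
    have zn: "0 \<le> z ^ Suc (Suc m)" "z ^ Suc (Suc m) \<le> 1" using assms
      by (simp, intro power_le_one, auto)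
    have qn: "0 \<le> Q ^ (Suc m * Suc m)" using assms by simp
    have zq0: "0 \<le> z ^ Suc (Suc m) * qN Q (Q*z) m" using zn N by simp
    have zq1: "z ^ Suc (Suc m) * qN Q (Q*z) m \<le> 1" using zn N by (intro mult_le_one) auto
    have num0: "0 \<le> Q ^ (Suc m * Suc m) * z ^ Suc (Suc m) * qN Q (Q*z) m"
      unfolding mult.assoc by (rule mult_nonneg_nonneg[OF qn zq0])
    have num1: "Q ^ (Suc m * Suc m) * z ^ Suc (Suc m) * qN Q (Q*z) m \<le> Q ^ (Suc m * Suc m)"
      using mult_left_mono[OF zq1 qn] by (simp add: mult.assoc)
    have den0: "0 < qD Q m * qB x y Q z (Suc m)" using D B by simp
    have "qD Q m * 1 \<le> qD Q m * qB x y Q z (Suc m)" using B D by (intro mult_left_mono) auto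
    hence den1: "(1 - Q) ^ m \<le> qD Q m * qB x y Q z (Suc m)" using D by linarith
    have "(1 - Q) ^ Suc m \<le> (1 - Q) ^ m" using assms by (simp add: power_decreasing)
    hence den2: "(1 - Q) ^ Suc m \<le> qD Q m * qB x y Q z (Suc m)" using den1 by linarith
    have p1: "0 < (1 - Q) ^ Suc m" using assms by simp
    show ?thesis unfolding Suc Fz_Suc domq_def
      using num0 den0 frac_le[OF qn num1 p1 den2] by simp
  qed
  thus "0 \<le> Fz x y Q z n" "Fz x y Q z n \<le> domq Q n" by auto
qed

lemma Fz_lim: assumes "0 \<le> Q" "Q < 1" "0 \<le> z" "z \<le> 1" "0 \<le> x" "0 \<le> y"
  shows "Fz x y Q z \<longlonglongrightarrow> 0"
proof (rule tendsto_sandwich[of "\<lambda>_. 0" _ _ "domq Q"])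
  show "\<forall>\<^sub>F n in sequentially. 0 \<le> Fz x y Q z n" using Fz_bounds[OF assms] by simp
  show "\<forall>\<^sub>F n in sequentially. Fz x y Q z n \<le> domq Q n" using Fz_bounds[OF assms] by simp
  show "(\<lambda>_. 0) \<longlonglongrightarrow> (0::real)" by simp
  show "domq Q \<longlonglongrightarrow> 0" using summable_LIMSEQ_zero[OF dom_summable[OF assms(1,2)]] .
qed

lemma FE:
  assumes Qd: "Q = x * y" and pos: "0 < x" "0 < y" "Q < 1" "0 \<le> z" "z \<le> 1"
  shows "Phi x y Q z = (1+x*z+y*z)/((1+x*z)*(1+y*z)) * Phi x y Q (Q*z)
     + Q*z*(1-Q*z)/((1+x*z)*(1+y*z)*((1+x*(Q*z))*(1+y*(Q*z)))) * Phi x y Q (Q*(Q*z))"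
proof -
  define c1 where "c1 = (1+x*z+y*z)/((1+x*z)*(1+y*z))"
  define c2 where "c2 = Q*z*(1-Q*z)/((1+x*z)*(1+y*z)*((1+x*(Q*z))*(1+y*(Q*z))))"
  have Q0: "0 < Q" using Qd pos by simp
  have z1: "0 \<le> Q*z" "Q*z \<le> 1" using pos Q0 by (auto simp: mult_le_one)
  have z2: "0 \<le> Q*(Q*z)" "Q*(Q*z) \<le> 1" using z1 pos Q0 by (auto simp: mult_le_one)
  have s0: "phi x y Q z sums Phi x y Q z"
    unfolding Phi_def using phi_summable pos Q0 by auto
  have s1: "phi x y Q (Q*z) sums Phi x y Q (Q*z)"
    unfolding Phi_def using phi_summable pos Q0 z1 by auto
  have s2: "phi x y Q (Q*(Q*z)) sums Phi x y Q (Q*(Q*z))"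
    unfolding Phi_def using phi_summable pos Q0 z2 by auto
  define h where "h n = (if n = 0 then 0 else c2 * phi x y Q (Q*(Q*z)) (n - 1))" for n
  have "(\<lambda>n. h (Suc n)) sums (c2 * Phi x y Q (Q*(Q*z)))"
    unfolding h_def using sums_mult[OF s2, of c2] by simp
  hence "h sums (c2 * Phi x y Q (Q*(Q*z)) + h 0)" by (rule sums_Suc_iff[THEN iffD1])
  hence sh: "h sums (c2 * Phi x y Q (Q*(Q*z)))" by (simp add: h_def)
  have sg: "(\<lambda>n. phi x y Q z n - c1 * phi x y Q (Q*z) n - h n) sums
       (Phi x y Q z - c1 * Phi x y Q (Q*z) - c2 * Phi x y Q (Q*(Q*z)))"
    by (intro sums_diff sums_mult s0 s1 sh)
  have eq: "phi x y Q z n - c1 * phi x y Q (Q*z) n - h n = Fz x y Q z (Suc n) - Fz x y Q z n" for n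
  proof (cases n)
    case 0
    have "0 < (1+x*z)*(1+y*z)" using pos by (intro mult_pos_pos add_pos_nonneg) auto
    hence b0: "(1+x*z)*(1+y*z) \<noteq> 0" by linarith
    have "1 - c1 = Q*z^2/((1+x*z)*(1+y*z))" unfolding c1_def using b0 Qd
      by (simp add: field_simps power2_eq_square)
    then show ?thesis using 0 by (simp add: phi_def h_def Fz_def qN_def qD_def qB_def power2_eq_square)
  next
    case (Suc m)
    then show ?thesis unfolding h_def c1_def c2_def using term_suc[OF Qd pos, of m] by simp
  qed
  have "(\<lambda>n. Fz x y Q z (Suc n) - Fz x y Q z n) sums (0 - Fz x y Q z 0)"
    by (rule telescope_sums[OF Fz_lim]) (use pos Q0 in auto)
  hence "(\<lambda>n. phi x y Q z n - c1 * phi x y Q (Q*z) n - h n) sums 0"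
    by (simp add: eq Fz_def)
  with sg have "Phi x y Q z - c1 * Phi x y Q (Q*z) - c2 * Phi x y Q (Q*(Q*z)) = 0"
    using sums_unique2 by blast
  thus ?thesis unfolding c1_def c2_def by simp
qed

lemma om: "(1::real) + a \<noteq> 0 \<Longrightarrow> 1 - a / (1 + a) = 1 / (1 + a)"
  by (simp add: field_simps)

lemma coef1:
  fixes x y Q Z :: real
  assumes Qd: "Q = x * y" and pos: "0 < x" "0 < y" "0 \<le> Z"
  shows "((1 - y*Z/(1+y*Z)) * (1 - Q*Z/(1+Q*Z)) + (1 - x*Z/(1+x*Z)) * (y*Z/(1+y*Z)) * (1 - Q*Z/(1+Q*Z)))
      * (1 + Q*Z) = (1+x*Z+y*Z)/((1+x*Z)*(1+y*Z))"
proof -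
  have Q0: "0 < Q" using Qd pos by simp
  define uu where "uu = x*Z"
  define vv where "vv = y*Z"
  define ww where "ww = Q*Z"
  have u0: "0 \<le> uu" and v0: "0 \<le> vv" and w0: "0 \<le> ww" using pos Q0 by (auto simp: uu_def vv_def ww_def)
  have nz: "1+uu \<noteq> 0" "1+vv \<noteq> 0" "1+ww \<noteq> 0"
    using u0 v0 w0 by (auto intro!: less_imp_neq[symmetric] add_pos_nonneg)
  have "((1 - vv/(1+vv)) * (1 - ww/(1+ww)) + (1 - uu/(1+uu)) * (vv/(1+vv)) * (1 - ww/(1+ww))) * (1 + ww)
      = (1+uu+vv)/((1+uu)*(1+vv))"
  proof -
    define iu where "iu = 1/(1+uu)"
    define iv where "iv = 1/(1+vv)"
    define iw where "iw = 1/(1+ww)"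
    have h: "iu*(1+uu) = 1" "iv*(1+vv) = 1" "iw*(1+ww) = 1" using nz by (simp_all add: iu_def iv_def iw_def)
    have d: "a/(1+uu) = a*iu" "a/(1+vv) = a*iv" "a/(1+ww) = a*iw" for a
      by (simp_all add: iu_def iv_def iw_def)
    have r: "(1+uu+vv)/((1+uu)*(1+vv)) = (1+uu+vv)*iu*iv" by (simp add: iu_def iv_def)
    show ?thesis unfolding om[OF nz(1)] om[OF nz(2)] om[OF nz(3)] d r using h by algebra
  qed
  thus ?thesis by (simp add: uu_def vv_def ww_def)
qed

lemma coef2:
  fixes x y Q Z :: real
  assumes Qd: "Q = x * y" and pos: "0 < x" "0 < y" "0 \<le> Z"
  shows "((1 - x*Z/(1+x*Z)) * (1 - y*Z/(1+y*Z)) * (Q*Z/(1+Q*Z))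
          * ((1 - x*(Q*Z)/(1+x*(Q*Z))) * (1 - y*(Q*Z)/(1+y*(Q*Z))) * (1 - Q*(Q*Z)/(1+Q*(Q*Z))))
      - (1 - x*Z/(1+x*Z)) * (y*Z/(1+y*Z)) * (1 - Q*Z/(1+Q*Z))
          * ((x*(Q*Z)/(1+x*(Q*Z))) * (1 - y*(Q*Z)/(1+y*(Q*Z))) * (1 - Q*(Q*Z)/(1+Q*(Q*Z)))))
      * ((1 + Q*Z) * (1 + Q*(Q*Z)))
    = Q*Z*(1-Q*Z)/((1+x*Z)*(1+y*Z)*((1+x*(Q*Z))*(1+y*(Q*Z))))"
proof -
  have Q0: "0 < Q" using Qd pos by simp
  define uu where "uu = x*Z"
  define vv where "vv = y*Z"
  define ww where "ww = Q*Z"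
  define uq where "uq = x*(Q*Z)"
  define vq where "vq = y*(Q*Z)"
  define wq where "wq = Q*(Q*Z)"
  have uv: "vv * uq = ww*ww" unfolding uq_def vv_def ww_def Qd by (simp add: algebra_simps)
  have pos': "0 \<le> uu" "0 \<le> vv" "0 \<le> ww" "0 \<le> uq" "0 \<le> vq" "0 \<le> wq"
    using pos Q0 by (auto simp: uu_def vv_def ww_def uq_def vq_def wq_def)
  have nz: "1+uu \<noteq> 0" "1+vv \<noteq> 0" "1+ww \<noteq> 0" "1+uq \<noteq> 0" "1+vq \<noteq> 0" "1+wq \<noteq> 0"
    using pos' by (auto intro!: less_imp_neq[symmetric] add_pos_nonneg)
  have "((1 - uu/(1+uu)) * (1 - vv/(1+vv)) * (ww/(1+ww))
          * ((1 - uq/(1+uq)) * (1 - vq/(1+vq)) * (1 - wq/(1+wq)))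
      - (1 - uu/(1+uu)) * (vv/(1+vv)) * (1 - ww/(1+ww))
          * ((uq/(1+uq)) * (1 - vq/(1+vq)) * (1 - wq/(1+wq))))
      * ((1 + ww) * (1 + wq))
     = (ww - vv*uq)/((1+uu)*(1+vv)*((1+uq)*(1+vq)))"
  proof -
    define iu where "iu = 1/(1+uu)"
    define iv where "iv = 1/(1+vv)"
    define iw where "iw = 1/(1+ww)"
    define iuq where "iuq = 1/(1+uq)"
    define ivq where "ivq = 1/(1+vq)"
    define iwq where "iwq = 1/(1+wq)"
    have h: "iu*(1+uu) = 1" "iv*(1+vv) = 1" "iw*(1+ww) = 1" "iuq*(1+uq) = 1" "ivq*(1+vq) = 1" "iwq*(1+wq) = 1"
      using nz by (simp_all add: iu_def iv_def iw_def iuq_def ivq_def iwq_def)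
    have d: "a/(1+uu) = a*iu" "a/(1+vv) = a*iv" "a/(1+ww) = a*iw"
        "a/(1+uq) = a*iuq" "a/(1+vq) = a*ivq" "a/(1+wq) = a*iwq" for a
      by (simp_all add: iu_def iv_def iw_def iuq_def ivq_def iwq_def)
    have r: "(ww - vv*uq)/((1+uu)*(1+vv)*((1+uq)*(1+vq))) = (ww - vv*uq)*iu*iv*iuq*ivq"
      by (simp add: iu_def iv_def iuq_def ivq_def)
    show ?thesis unfolding om[OF nz(1)] om[OF nz(2)] om[OF nz(3)] om[OF nz(4)] om[OF nz(5)] om[OF nz(6)] d r
      using h by algebra
  qed
  also have "\<dots> = ww*(1-ww)/((1+uu)*(1+vv)*((1+uq)*(1+vq)))" unfolding uv by (simp add: algebra_simps)
  finally show ?thesis by (simp add: uu_def vv_def ww_def uq_def vq_def wq_def)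
qed

lemma wronskian:
  fixes A Y al ga :: "nat \<Rightarrow> real" and B :: real
  assumes rA: "\<And>k. A k = al k * A (Suc k) + ga k * A (Suc (Suc k))"
    and rY: "\<And>k. Y k = al k * Y (Suc k) + ga k * Y (Suc (Suc k))"
    and g: "\<And>k. \<bar>ga k\<bar> \<le> 1/2" and bA: "\<And>k. \<bar>A k\<bar> \<le> B" and bY: "\<And>k. \<bar>Y k\<bar> \<le> B"
  shows "A 0 * Y 1 = A 1 * Y 0"
proof -
  define Wr where "Wr k = A k * Y (Suc k) - A (Suc k) * Y k" for k
  have step: "Wr k = - ga k * Wr (Suc k)" for k
  proof -
    have "Wr k = (al k * A (Suc k) + ga k * A (Suc (Suc k))) * Y (Suc k)
       - A (Suc k) * (al k * Y (Suc k) + ga k * Y (Suc (Suc k)))"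
      unfolding Wr_def by (subst rA, subst rY, rule refl)
    thus ?thesis unfolding Wr_def by (simp add: algebra_simps)
  qed
  have B0: "0 \<le> B" using bA[of 0] by simp
  have bW: "\<bar>Wr k\<bar> \<le> 2 * B * B" for k
  proof -
    have "\<bar>A k * Y (Suc k)\<bar> \<le> B * B" unfolding abs_mult
      by (rule mult_mono) (use bA bY B0 in auto)
    moreover have "\<bar>A (Suc k) * Y k\<bar> \<le> B * B" unfolding abs_mult
      by (rule mult_mono) (use bA bY B0 in auto)
    ultimately show ?thesis unfolding Wr_def by linarith
  qed
  have ind: "\<bar>Wr 0\<bar> \<le> (1/2) ^ n * \<bar>Wr n\<bar>" for n
  proof (induction n)
    case 0 then show ?case by simp
  next
    case (Suc n)
    have "\<bar>Wr n\<bar> = \<bar>ga n\<bar> * \<bar>Wr (Suc n)\<bar>" using step[of n] by (simp add: abs_mult)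
    also have "\<dots> \<le> 1/2 * \<bar>Wr (Suc n)\<bar>" by (rule mult_right_mono[OF g]) simp
    finally have h2: "(1/2) ^ n * \<bar>Wr n\<bar> \<le> (1/2) ^ n * (1/2 * \<bar>Wr (Suc n)\<bar>)"
      by (rule mult_left_mono) simp
    have eq: "(1/2::real) ^ n * (1/2 * \<bar>Wr (Suc n)\<bar>) = (1/2) ^ Suc n * \<bar>Wr (Suc n)\<bar>" by simp
    show ?case using Suc.IH h2 eq by linarith
  qed
  have le: "\<bar>Wr 0\<bar> \<le> (1/2) ^ n * (2 * B * B)" for n
  proof -
    have "(1/2::real) ^ n * \<bar>Wr n\<bar> \<le> (1/2) ^ n * (2 * B * B)" by (rule mult_left_mono[OF bW]) simp
    thus ?thesis using ind[of n] by linarith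
  qed
  have lim: "(\<lambda>n. (1/2::real) ^ n * (2 * B * B)) \<longlonglongrightarrow> 0 * (2 * B * B)"
    by (intro tendsto_mult tendsto_const LIMSEQ_power_zero) simp
  have "\<bar>Wr 0\<bar> \<le> 0 * (2 * B * B)"
    by (rule LIMSEQ_le_const[OF lim]) (use le in auto)
  hence "Wr 0 = 0" by simp
  thus ?thesis unfolding Wr_def by simp
qed


definition rho :: "real \<Rightarrow> nat \<Rightarrow> real" where
  "rho Q k = (\<Prod>j<k. 1 + Q ^ Suc j)"

lemma rho_Suc: "rho Q (Suc k) = rho Q k * (1 + Q ^ Suc k)"
  by (simp add: rho_def)

lemma rho_bound: assumes "0 \<le> Q" "Q < 1" shows "0 \<le> rho Q k" "rho Q k \<le> exp (1 / (1 - Q))"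
proof -
  show "0 \<le> rho Q k" unfolding rho_def using assms by (intro prod_nonneg) auto
  have "rho Q k \<le> (\<Prod>j<k. exp (Q ^ Suc j))"
    unfolding rho_def by (rule prod_mono) (use assms in auto)
  also have "\<dots> = exp (\<Sum>j<k. Q ^ Suc j)" by (simp add: exp_sum)
  also have "\<dots> \<le> exp (1 / (1 - Q))"
  proof -
    have "(\<Sum>j<k. Q ^ Suc j) \<le> (\<Sum>j<k. Q ^ j)"
      by (rule sum_mono) (use assms in \<open>simp add: mult_left_le_one_le\<close>)
    also have "\<dots> = (1 - Q ^ k) / (1 - Q)" using assms by (simp add: sum_gp_strict)
    also have "\<dots> \<le> 1 / (1 - Q)" using assms by (simp add: divide_right_mono)
    finally show ?thesis by simp
  qed
  finally show "rho Q k \<le> exp (1 / (1 - Q))" .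
qed

lemma Phi_bounds: assumes "0 \<le> Q" "Q < 1" "0 \<le> z" "z \<le> 1" "0 \<le> x" "0 \<le> y"
  shows "0 \<le> Phi x y Q z" "Phi x y Q z \<le> suminf (domq Q)"
proof -
  note s = phi_summable[OF assms] and b = phi_bounds[OF assms]
  show "0 \<le> Phi x y Q z" unfolding Phi_def using s b by (intro suminf_nonneg) auto
  show "Phi x y Q z \<le> suminf (domq Q)" unfolding Phi_def
    by (rule suminf_le[OF _ s dom_summable[OF assms(1,2)]]) (use b in auto)
qed

lemma Phi_one: "Phi x y Q 1 = 1"
proof -
  have e: "phi x y Q 1 n = (if n = 0 then 1 else 0)" for n
  proof (cases n)
    case 0 then show ?thesis by (simp add: phi_def qN_def qD_def qB_def)
  next
    case (Suc m) then show ?thesis by (simp add: phi_def qN_shift)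
  qed
  have "(\<lambda>n. if n = 0 then (\<lambda>_. 1::real) n else 0) sums 1" using sums_single[of 0 "\<lambda>_. 1::real"] by simp
  hence "phi x y Q 1 sums 1" unfolding e[abs_def] by simp
  thus ?thesis unfolding Phi_def by (rule sums_unique[symmetric])
qed

lemma Phi_Q:
  assumes Qd: "Q = x * y" and pos: "0 < x" "0 < y" "Q < 1"
  shows "Phi x y Q Q = (1 + x) * (1 + y) * g3 (- x) Q" "0 < Phi x y Q Q"
proof -
  have Q0: "0 < Q" using Qd pos by simp
  have c0: "0 < (1 + x) * (1 + y)" using pos by simp
  have iv: "inverse (- x) * Q = - y" using pos Qd by (simp add: field_simps)
  have tm: "Q ^ (n * (n + 1)) / (qpoch (- x) Q (n + 1) * qpoch (inverse (- x) * Q) Q (n + 1))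
        = phi x y Q Q n / ((1 + x) * (1 + y))" for n
  proof -
    have N: "qN Q Q n = qD Q n" unfolding qN_def qD_def by simp
    have D: "0 < qD Q n" using qD_bound Q0 pos by auto
    have B: "0 < qB x y Q Q n" using qB_bound[of Q x y Q n] Q0 pos by simp
    have P: "qpoch (- x) Q (n + 1) * qpoch (inverse (- x) * Q) Q (n + 1) = (1 + x) * (1 + y) * qB x y Q Q n"
    proof -
      have "qpoch (- x) Q (n + 1) * qpoch (inverse (- x) * Q) Q (n + 1) = qB x y Q 1 (Suc n)"
        unfolding iv qpoch_def qB_def by (simp add: prod.distrib)
      also have "\<dots> = (1 + x) * (1 + y) * qB x y Q Q n" using qB_shift[of x y Q 1 n] by simp
      finally show ?thesis .
    qed
    have e: "n * (n + 1) = n * n + n" by simp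
    show ?thesis unfolding P phi_def N e power_add using D B c0 by (simp add: field_simps)
  qed
  have s: "summable (phi x y Q Q)" using phi_summable[of Q Q x y] Q0 pos by simp
  have "g3 (- x) Q = Phi x y Q Q / ((1 + x) * (1 + y))"
    unfolding g3_def tm Phi_def by (rule suminf_divide[OF s])
  moreover have nx: "1 + x \<noteq> 0" "1 + y \<noteq> 0" using pos by auto
  ultimately show "Phi x y Q Q = (1 + x) * (1 + y) * g3 (- x) Q" by simp
  have "(\<Sum>n\<in>{0}. phi x y Q Q n) \<le> suminf (phi x y Q Q)"
    by (rule sum_le_suminf[OF s]) (use phi_bounds[of Q Q x y] Q0 pos in auto)
  moreover have "phi x y Q Q 0 = 1" by (simp add: phi_def qN_def qD_def qB_def)
  ultimately show "0 < Phi x y Q Q" unfolding Phi_def by simp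
qed


locale thm_setup = prob_space M for M :: "'a measure" +
  fixes E :: "nat \<Rightarrow> 'a set" and q :: real and d r :: nat
  assumes q0: "0 < q" and q1: "q < 1" and d3: "d \<ge> 3" and r1: "1 \<le> r" and rd: "2 * r < d"
    and ind: "indep_events E {1..}"
    and pE: "\<And>j. j \<ge> 1 \<Longrightarrow> prob (E j) = q ^ j / (1 + q ^ j)"
begin

definition W :: "nat \<Rightarrow> 'a set" where
  "W k = space M \<inter> (\<Inter>n\<in>{k..}. blk M d r E n)"
definition G :: "nat \<Rightarrow> 'a set set" where
  "G m = sigma_sets (space M) (E ` {m..})"

lemma E_ev: "1 \<le> j \<Longrightarrow> E j \<in> events"
  using ind unfolding indep_events_def by auto

lemma E_sub: "1 \<le> j \<Longrightarrow> E j \<subseteq> space M"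
  using E_ev sets.sets_into_space by blast

lemma G_sa: assumes "1 \<le> m" shows "sigma_algebra (space M) (G m)"
proof -
  have "E j \<subseteq> space M" if "j \<in> {m..}" for j using E_sub[of j] that assms by simp
  hence "E ` {m..} \<subseteq> Pow (space M)" by auto
  thus ?thesis unfolding G_def by (rule sigma_algebra_sigma_sets)
qed

lemma G_ev: "1 \<le> m \<Longrightarrow> G m \<subseteq> events"
  unfolding G_def by (rule sets.sigma_sets_subset) (use E_ev in auto)

lemma G_mono: "m \<le> m' \<Longrightarrow> G m' \<subseteq> G m"
  unfolding G_def by (rule sigma_sets_mono') auto

lemma E_G: "m \<le> j \<Longrightarrow> E j \<in> G m"
  unfolding G_def by (rule sigma_sets.Basic) auto

lemma F_G: "m \<le> j \<Longrightarrow> space M - E j \<in> G m"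
  unfolding G_def by (rule sigma_sets.Compl) (rule sigma_sets.Basic, auto)

lemma space_G: "space M \<in> G m"
  unfolding G_def by (rule sigma_sets_top)

lemma blk_eq: "blk M d r E n =
   ((E (n*d+r) \<inter> (space M - E (n*d+(d-r))) \<inter> (space M - E (Suc n*d))) \<union> (space M - E (n*d+r)))
 \<inter> ((E (n*d+(d-r)) \<inter> (space M - E (Suc n*d)) \<inter> (space M - E (Suc n*d+r))) \<union> (space M - E (n*d+(d-r))))
 \<inter> ((E (Suc n*d) \<inter> (space M - E (Suc n*d+r)) \<inter> (space M - E (Suc n*d+(d-r)))
      \<inter> (space M - E (Suc (Suc n)*d))) \<union> (space M - E (Suc n*d)))"
  unfolding blk_def Ev_def Fv_def by simp

lemma blk_G: "blk M d r E n \<in> G (n*d+r)"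
proof -
  have m: "1 \<le> n*d+r" using r1 by simp
  interpret S: sigma_algebra "space M" "G (n*d+r)" by (rule G_sa[OF m])
  have i1: "n*d+r \<le> n*d+(d-r)" "n*d+r \<le> Suc n*d" "n*d+r \<le> Suc n*d+r" "n*d+r \<le> Suc n*d+(d-r)"
    "n*d+r \<le> Suc (Suc n)*d" using rd by auto
  note EG = E_G[OF i1(1)] E_G[OF i1(2)] E_G[OF i1(3)] E_G[OF i1(4)] E_G[OF i1(5)] E_G[of "n*d+r" "n*d+r"]
  note FG = F_G[OF i1(1)] F_G[OF i1(2)] F_G[OF i1(3)] F_G[OF i1(4)] F_G[OF i1(5)] F_G[of "n*d+r" "n*d+r"]
  show ?thesis unfolding blk_eq using EG FG by (intro S.Int S.Un) auto
qed

lemma W_G: "W k \<in> G (k*d+r)"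
proof -
  have m: "1 \<le> k*d+r" using r1 by simp
  interpret S: sigma_algebra "space M" "G (k*d+r)" by (rule G_sa[OF m])
  have "blk M d r E n \<in> G (k*d+r)" if "n \<in> {k..}" for n
  proof -
    have "k*d+r \<le> n*d+r" using that by simp
    thus ?thesis using G_mono blk_G by blast
  qed
  hence "(\<Inter>n\<in>{k..}. blk M d r E n) \<in> G (k*d+r)"
    by (intro S.countable_INT') auto
  thus ?thesis unfolding W_def using space_G by (intro S.Int) auto
qed

lemma split:
  assumes i: "1 \<le> i" and Y: "Y \<in> G (Suc i)"
  shows "prob (E i \<inter> Y) = prob (E i) * prob Y"
    "prob ((space M - E i) \<inter> Y) = prob (space M - E i) * prob Y"
proof -
  define I where "I b = (if b then {i} else {Suc i..})" for b
  have "indep_sets (\<lambda>j. {E j}) {1..}" using ind unfolding indep_events_def_alt .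
  hence "indep_sets (\<lambda>j. {E j}) (\<Union>b. I b)"
    by (rule indep_sets_mono_index[rotated]) (use i in \<open>auto simp: I_def\<close>)
  hence ind2: "indep_sets (\<lambda>b. sigma_sets (space M) (\<Union>j\<in>I b. {E j})) UNIV"
    by (rule indep_sets_collect_sigma) (auto simp: I_def Int_stable_def disjoint_family_on_def)
  have g1: "(\<Union>j\<in>I True. {E j}) = {E i}" by (simp add: I_def)
  have g2: "(\<Union>j\<in>I False. {E j}) = E ` {Suc i..}" by (auto simp: I_def)
  have Y2: "Y \<in> sigma_sets (space M) (\<Union>j\<in>I False. {E j})" using Y unfolding g2 G_def .
  have X1: "E i \<in> sigma_sets (space M) (\<Union>j\<in>I True. {E j})" unfolding g1 by (rule sigma_sets.Basic) simp
  have X2: "space M - E i \<in> sigma_sets (space M) (\<Union>j\<in>I True. {E j})" unfolding g1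
    by (rule sigma_sets.Compl) (rule sigma_sets.Basic, simp)
  have key: "prob (X \<inter> Y) = prob X * prob Y"
    if X: "X \<in> sigma_sets (space M) (\<Union>j\<in>I True. {E j})" for X
  proof -
    have "prob (\<Inter>b\<in>UNIV. (if b then X else Y)) = (\<Prod>b\<in>UNIV. prob (if b then X else Y))"
      by (rule indep_setsD[OF ind2]) (use X Y2 in auto)
    thus ?thesis by (simp add: UNIV_bool Int_commute)
  qed
  show "prob (E i \<inter> Y) = prob (E i) * prob Y" by (rule key[OF X1])
  show "prob ((space M - E i) \<inter> Y) = prob (space M - E i) * prob Y" by (rule key[OF X2])
qed


definition p :: "nat \<Rightarrow> real" where "p j = q ^ j / (1 + q ^ j)"

lemma prob_E: "1 \<le> j \<Longrightarrow> prob (E j) = p j"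
  using pE by (simp add: p_def)

lemma prob_F: "1 \<le> j \<Longrightarrow> prob (space M - E j) = 1 - p j"
  using prob_compl[OF E_ev] prob_E by simp

lemma G_Int: assumes "1 \<le> m" "A \<in> G m" "B \<in> G m" shows "A \<inter> B \<in> G m"
proof -
  interpret S: sigma_algebra "space M" "G m" by (rule G_sa[OF assms(1)])
  show ?thesis using assms(2,3) by (rule S.Int)
qed

lemma G_ev': "1 \<le> m \<Longrightarrow> A \<in> G m \<Longrightarrow> A \<in> events"
  using G_ev by blast

lemma W_G': "m \<le> k*d+r \<Longrightarrow> W k \<in> G m"
  using G_mono W_G by blast

lemma W_sub: "W k \<subseteq> space M" unfolding W_def by auto

lemma W_step: "W k = space M \<inter> blk M d r E k \<inter> W (Suc k)"
proof -
  have "{k..} = insert k {Suc k..}" by auto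
  thus ?thesis unfolding W_def by auto
qed

lemma decomp:
  fixes \<Omega> b c a b' c' a' b'' c'' a'' W2 :: "'x set"
  assumes "W2 \<subseteq> \<Omega>"
  defines "blk1 \<equiv> ((b' \<inter> (\<Omega>-c') \<inter> (\<Omega>-a')) \<union> (\<Omega>-b')) \<inter> ((c' \<inter> (\<Omega>-a') \<inter> (\<Omega>-b'')) \<union> (\<Omega>-c'))
      \<inter> ((a' \<inter> (\<Omega>-b'') \<inter> (\<Omega>-c'') \<inter> (\<Omega>-a'')) \<union> (\<Omega>-a'))"
  defines "blk0 \<equiv> ((b \<inter> (\<Omega>-c) \<inter> (\<Omega>-a)) \<union> (\<Omega>-b)) \<inter> ((c \<inter> (\<Omega>-a) \<inter> (\<Omega>-b')) \<union> (\<Omega>-c))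
      \<inter> ((a \<inter> (\<Omega>-b') \<inter> (\<Omega>-c') \<inter> (\<Omega>-a')) \<union> (\<Omega>-a))"
  shows "\<Omega> \<inter> blk0 \<inter> (\<Omega> \<inter> blk1 \<inter> W2) =
      ((\<Omega>-c) \<inter> ((\<Omega>-a) \<inter> (\<Omega> \<inter> blk1 \<inter> W2)))
    \<union> ((\<Omega>-b) \<inter> (c \<inter> ((\<Omega>-a) \<inter> ((\<Omega>-b') \<inter> (\<Omega> \<inter> blk1 \<inter> W2)))))
    \<union> ((\<Omega>-b) \<inter> ((\<Omega>-c) \<inter> (a \<inter> ((\<Omega>-b') \<inter> ((\<Omega>-c') \<inter> ((\<Omega>-a') \<inter> W2))))))"
    "(\<Omega> \<inter> blk1 \<inter> W2) \<inter> b' = b' \<inter> ((\<Omega>-c') \<inter> ((\<Omega>-a') \<inter> W2))"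
    "(\<Omega>-b) \<inter> ((\<Omega>-c) \<inter> (\<Omega>-a)) \<inter> (\<Omega> \<inter> blk0 \<inter> (\<Omega> \<inter> blk1 \<inter> W2))
       = (\<Omega>-b) \<inter> ((\<Omega>-c) \<inter> ((\<Omega>-a) \<inter> (\<Omega> \<inter> blk1 \<inter> W2)))"
  using assms(1) unfolding blk0_def blk1_def by blast+

lemma G_le: "m \<le> m' \<Longrightarrow> X \<in> G m' \<Longrightarrow> X \<in> G m"
  using G_mono by blast

lemma splitE: "1 \<le> i \<Longrightarrow> Y \<in> G (Suc i) \<Longrightarrow> prob (E i \<inter> Y) = p i * prob Y"
  using split(1) prob_E by simp

lemma splitF: "1 \<le> i \<Longrightarrow> Y \<in> G (Suc i) \<Longrightarrow> prob ((space M - E i) \<inter> Y) = (1 - p i) * prob Y"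
  using split(2) prob_F by simp

lemma FG_Int: "1 \<le> m \<Longrightarrow> m \<le> j \<Longrightarrow> Y \<in> G m \<Longrightarrow> (space M - E j) \<inter> Y \<in> G m"
  using G_Int F_G by blast

lemma EG_Int: "1 \<le> m \<Longrightarrow> m \<le> j \<Longrightarrow> Y \<in> G m \<Longrightarrow> E j \<inter> Y \<in> G m"
  using G_Int E_G by blast

definition A :: "nat \<Rightarrow> real" where "A k = prob (W k)"

lemma rec:
  fixes k :: nat
  defines "ib \<equiv> k*d+r" and "ic \<equiv> k*d+(d-r)" and "ia \<equiv> Suc k*d"
    and "ib' \<equiv> Suc k*d+r" and "ic' \<equiv> Suc k*d+(d-r)" and "ia' \<equiv> Suc (Suc k)*d"
  shows "A k = (1 - p ic) * (1 - p ia) * A (Suc k)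
     + (1 - p ib) * p ic * (1 - p ia) * (A (Suc k) - p ib' * (1 - p ic') * (1 - p ia') * A (Suc (Suc k)))
     + (1 - p ib) * (1 - p ic) * p ia * ((1 - p ib') * (1 - p ic') * (1 - p ia') * A (Suc (Suc k)))"
    "(1 - p ic) * (1 - p ia) * A (Suc k) \<le> A k"
    "prob ((space M - E ib) \<inter> ((space M - E ic) \<inter> (space M - E ia)) \<inter> W k)
       = (1 - p ib) * ((1 - p ic) * ((1 - p ia) * A (Suc k)))"
proof -
  define \<Omega> where "\<Omega> = space M"
  define W1 where "W1 = W (Suc k)"
  define W2 where "W2 = W (Suc (Suc k))"
  have ord: "1 \<le> ib" "Suc ib \<le> ic" "Suc ic \<le> ia" "Suc ia \<le> ib'" "Suc ib' \<le> ic'" "Suc ic' \<le> ia'"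
    unfolding ib_def ic_def ia_def ib'_def ic'_def ia'_def using r1 rd by auto
  have W1G: "W1 \<in> G (Suc ia)" unfolding W1_def by (rule W_G') (use r1 in \<open>simp add: ia_def\<close>)
  have W2G: "W2 \<in> G (Suc ia')" unfolding W2_def by (rule W_G') (use r1 in \<open>simp add: ia'_def\<close>)
  have i1: "1 \<le> ic" "1 \<le> ia" "1 \<le> ib'" "1 \<le> ic'" "1 \<le> ia'" using ord by auto
  have Wk: "W k = \<Omega> \<inter> blk M d r E k \<inter> (\<Omega> \<inter> blk M d r E (Suc k) \<inter> W2)"
    unfolding \<Omega>_def W2_def using W_step[of k] W_step[of "Suc k"] by simp
  have W1e: "W1 = \<Omega> \<inter> blk M d r E (Suc k) \<inter> W2" unfolding \<Omega>_def W1_def W2_def by (rule W_step)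
  have bk: "blk M d r E k = ((E ib \<inter> (\<Omega> - E ic) \<inter> (\<Omega> - E ia)) \<union> (\<Omega> - E ib))
     \<inter> ((E ic \<inter> (\<Omega> - E ia) \<inter> (\<Omega> - E ib')) \<union> (\<Omega> - E ic))
     \<inter> ((E ia \<inter> (\<Omega> - E ib') \<inter> (\<Omega> - E ic') \<inter> (\<Omega> - E ia')) \<union> (\<Omega> - E ia))"
    unfolding blk_eq \<Omega>_def ib_def ic_def ia_def ib'_def ic'_def ia'_def by (rule refl)
  have bk1: "blk M d r E (Suc k) = ((E ib' \<inter> (\<Omega> - E ic') \<inter> (\<Omega> - E ia')) \<union> (\<Omega> - E ib'))
     \<inter> ((E ic' \<inter> (\<Omega> - E ia') \<inter> (\<Omega> - E (Suc (Suc k)*d+r))) \<union> (\<Omega> - E ic'))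
     \<inter> ((E ia' \<inter> (\<Omega> - E (Suc (Suc k)*d+r)) \<inter> (\<Omega> - E (Suc (Suc k)*d+(d-r)))
          \<inter> (\<Omega> - E (Suc (Suc (Suc k))*d))) \<union> (\<Omega> - E ia'))"
    unfolding blk_eq \<Omega>_def ib_def ic_def ia_def ib'_def ic'_def ia'_def by (rule refl)
  have W2s: "W2 \<subseteq> \<Omega>" unfolding W2_def \<Omega>_def by (rule W_sub)
  have dc1: "W k = ((\<Omega> - E ic) \<inter> ((\<Omega> - E ia) \<inter> W1))
      \<union> ((\<Omega> - E ib) \<inter> (E ic \<inter> ((\<Omega> - E ia) \<inter> ((\<Omega> - E ib') \<inter> W1))))
      \<union> ((\<Omega> - E ib) \<inter> ((\<Omega> - E ic) \<inter> (E ia \<inter> ((\<Omega> - E ib') \<inter> ((\<Omega> - E ic') \<inter> ((\<Omega> - E ia') \<inter> W2))))))"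
    unfolding Wk W1e bk bk1 by (rule decomp(1)[OF W2s])
  have dc2: "W1 \<inter> E ib' = E ib' \<inter> ((\<Omega> - E ic') \<inter> ((\<Omega> - E ia') \<inter> W2))"
    unfolding W1e bk1 by (rule decomp(2)[OF W2s])
  note dc1' = dc1[unfolded \<Omega>_def] and dc2' = dc2[unfolded \<Omega>_def]
  have W1ev: "W1 \<in> events" using G_ev'[OF _ W1G] by simp
  have Y1: "(space M - E ia) \<inter> W1 \<in> G (Suc ic)"
    by (rule FG_Int) (use ord W1G G_le[OF _ W1G] in auto)
  have PS1: "prob ((space M - E ic) \<inter> ((space M - E ia) \<inter> W1)) = (1 - p ic) * ((1 - p ia) * A (Suc k))"
    using splitF[OF i1(1) Y1] splitF[OF i1(2) W1G] by (simp add: A_def W1_def)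
  have R1: "(space M - E ia') \<inter> W2 \<in> G (Suc ic')"
    by (rule FG_Int) (use ord G_le[OF _ W2G] in auto)
  have R2: "(space M - E ic') \<inter> ((space M - E ia') \<inter> W2) \<in> G (Suc ib')"
    by (rule FG_Int) (use ord G_le[OF _ R1] in auto)
  have PB: "prob (W1 \<inter> E ib') = p ib' * ((1 - p ic') * ((1 - p ia') * A (Suc (Suc k))))"
    unfolding dc2' using splitE[OF i1(3) R2] splitF[OF i1(4) R1] splitF[OF i1(5) W2G]
    by (simp add: A_def W2_def)
  have T1: "(space M - E ib') \<inter> W1 \<in> G (Suc ia)"
    by (rule FG_Int) (use ord W1G in auto)
  have PT1: "prob ((space M - E ib') \<inter> W1) = A (Suc k) - prob (W1 \<inter> E ib')"
  proof -
    have "(space M - E ib') \<inter> W1 = W1 - E ib'" using W_sub unfolding W1_def by auto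
    thus ?thesis using finite_measure_Diff'[OF W1ev E_ev[OF i1(3)]] by (simp add: A_def W1_def)
  qed
  have T2: "(space M - E ia) \<inter> ((space M - E ib') \<inter> W1) \<in> G (Suc ic)"
    by (rule FG_Int) (use ord G_le[OF _ T1] in auto)
  have T3: "E ic \<inter> ((space M - E ia) \<inter> ((space M - E ib') \<inter> W1)) \<in> G (Suc ib)"
    by (rule EG_Int) (use ord G_le[OF _ T2] in auto)
  have PS2: "prob ((space M - E ib) \<inter> (E ic \<inter> ((space M - E ia) \<inter> ((space M - E ib') \<inter> W1))))
     = (1 - p ib) * (p ic * ((1 - p ia) * (A (Suc k) - p ib' * ((1 - p ic') * ((1 - p ia') * A (Suc (Suc k)))))))"
    using splitF[OF ord(1) T3] splitE[OF i1(1) T2] splitF[OF i1(2) T1] PT1 PB by simp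
  have R3: "(space M - E ib') \<inter> ((space M - E ic') \<inter> ((space M - E ia') \<inter> W2)) \<in> G (Suc ia)"
    by (rule FG_Int) (use ord G_le[OF _ R2] in auto)
  have R4: "E ia \<inter> ((space M - E ib') \<inter> ((space M - E ic') \<inter> ((space M - E ia') \<inter> W2))) \<in> G (Suc ic)"
    by (rule EG_Int) (use ord G_le[OF _ R3] in auto)
  have R5: "(space M - E ic) \<inter> (E ia \<inter> ((space M - E ib') \<inter> ((space M - E ic') \<inter> ((space M - E ia') \<inter> W2))))
     \<in> G (Suc ib)"
    by (rule FG_Int) (use ord G_le[OF _ R4] in auto)
  have PS3: "prob ((space M - E ib) \<inter> ((space M - E ic) \<inter> (E ia \<inter> ((space M - E ib') \<inter> ((space M - E ic')
      \<inter> ((space M - E ia') \<inter> W2))))))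
     = (1 - p ib) * ((1 - p ic) * (p ia * ((1 - p ib') * ((1 - p ic') * ((1 - p ia') * A (Suc (Suc k)))))))"
    using splitF[OF ord(1) R5] splitF[OF i1(1) R4] splitE[OF i1(2) R3] splitF[OF i1(3) R2]
      splitF[OF i1(4) R1] splitF[OF i1(5) W2G] by (simp add: A_def W2_def)
  have ev1: "(space M - E ic) \<inter> ((space M - E ia) \<inter> W1) \<in> events"
    by (rule G_ev'[of ic], rule i1(1), rule FG_Int) (use ord G_le[OF _ Y1] in auto)
  have ev2: "(space M - E ib) \<inter> (E ic \<inter> ((space M - E ia) \<inter> ((space M - E ib') \<inter> W1))) \<in> events"
    by (rule G_ev'[of ib], rule ord(1), rule FG_Int) (use ord G_le[OF _ T3] in auto)
  have ev3: "(space M - E ib) \<inter> ((space M - E ic) \<inter> (E ia \<inter> ((space M - E ib') \<inter> ((space M - E ic')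
      \<inter> ((space M - E ia') \<inter> W2))))) \<in> events"
    by (rule G_ev'[of ib], rule ord(1), rule FG_Int) (use ord G_le[OF _ R5] in auto)
  have sum: "A k = prob ((space M - E ic) \<inter> ((space M - E ia) \<inter> W1))
     + prob ((space M - E ib) \<inter> (E ic \<inter> ((space M - E ia) \<inter> ((space M - E ib') \<inter> W1))))
     + prob ((space M - E ib) \<inter> ((space M - E ic) \<inter> (E ia \<inter> ((space M - E ib') \<inter> ((space M - E ic')
      \<inter> ((space M - E ia') \<inter> W2))))))"
    unfolding A_def dc1' using ev1 ev2 ev3
    by (subst finite_measure_Union, blast, blast, blast, subst finite_measure_Union) auto
  show "A k = (1 - p ic) * (1 - p ia) * A (Suc k)
     + (1 - p ib) * p ic * (1 - p ia) * (A (Suc k) - p ib' * (1 - p ic') * (1 - p ia') * A (Suc (Suc k)))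
     + (1 - p ib) * (1 - p ic) * p ia * ((1 - p ib') * (1 - p ic') * (1 - p ia') * A (Suc (Suc k)))"
    unfolding sum PS1 PS2 PS3 by (simp add: algebra_simps)
  have dc3: "(space M - E ib) \<inter> ((space M - E ic) \<inter> (space M - E ia)) \<inter> W k
     = (space M - E ib) \<inter> ((space M - E ic) \<inter> ((space M - E ia) \<inter> W1))"
    unfolding Wk W1e bk bk1 \<Omega>_def[symmetric] by (rule decomp(3)[OF W2s])
  have Y0: "(space M - E ic) \<inter> ((space M - E ia) \<inter> W1) \<in> G (Suc ib)"
    by (rule FG_Int) (use ord G_le[OF _ Y1] in auto)
  show "prob ((space M - E ib) \<inter> ((space M - E ic) \<inter> (space M - E ia)) \<inter> W k)
       = (1 - p ib) * ((1 - p ic) * ((1 - p ia) * A (Suc k)))"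
    unfolding dc3 using splitF[OF ord(1) Y0] PS1 by simp
  show "(1 - p ic) * (1 - p ia) * A (Suc k) \<le> A k"
    unfolding sum using PS1 measure_nonneg[of M] by (simp add: mult.assoc add_increasing2)
qed



lemma p_bounds: "0 \<le> p j" "p j \<le> 1/2" "p j \<le> q ^ j"
proof -
  have a: "0 < q ^ j" "q ^ j \<le> 1" using q0 q1 by (auto simp: power_le_one)
  show "0 \<le> p j" using a by (simp add: p_def)
  show "p j \<le> 1/2" using a by (simp add: p_def field_simps)
  show "p j \<le> q ^ j" using a by (simp add: p_def field_simps)
qed

lemma A_bounds: "0 \<le> A k" "A k \<le> 1"
  by (simp_all add: A_def)

lemma A_pos_ex: "\<exists>K. 0 < A K"
proof -
  have "(\<lambda>n. q ^ n) \<longlonglongrightarrow> 0" using q0 q1 by (intro LIMSEQ_power_zero) auto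
  from LIMSEQ_D[OF this, of "1 - q"] q1 obtain K where K: "\<bar>q ^ K\<bar> < 1 - q"
    by auto
  define m where "m = K * d + r"
  have m1: "1 \<le> m" using r1 by (simp add: m_def)
  define U where "U = (\<Union>i. E (m + i))"
  have ev: "range (\<lambda>i. E (m + i)) \<subseteq> events" using E_ev m1 by auto
  have sg: "summable (\<lambda>i. q ^ (m + i))" using q0 q1 by (simp add: power_add summable_geometric)
  have le1: "prob (E (m + i)) \<le> q ^ (m + i)" for i using prob_E[of "m+i"] m1 p_bounds(3) by simp
  have sp: "summable (\<lambda>i. prob (E (m + i)))"
    by (rule summable_comparison_test[OF _ sg]) (use le1 in auto)
  have "prob U \<le> (\<Sum>i. prob (E (m + i)))"
    unfolding U_def by (rule finite_measure_subadditive_countably[OF ev sp])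
  also have "\<dots> \<le> (\<Sum>i. q ^ (m + i))" by (rule suminf_le[OF le1 sp sg])
  also have "\<dots> = q ^ m / (1 - q)"
    using q0 q1 by (simp add: power_add suminf_mult suminf_geometric)
  also have "\<dots> \<le> q ^ K / (1 - q)"
  proof -
    have "K \<le> K * d" using d3 by simp
    hence "K \<le> m" unfolding m_def by (rule trans_le_add1)
    hence "q ^ m \<le> q ^ K" using q0 q1 by (intro power_decreasing) auto
    thus ?thesis using q1 by (simp add: divide_right_mono)
  qed
  also have "\<dots> < 1" using K q0 q1 by (simp add: field_simps)
  finally have PU: "prob U < 1" .
  have Uev: "U \<in> events" unfolding U_def using ev by auto
  have sub: "space M - U \<subseteq> W K"
  proof
    fix \<omega> assume w: "\<omega> \<in> space M - U"
    have nE: "\<omega> \<notin> E j" if "m \<le> j" for j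
    proof -
      have "E j = E (m + (j - m))" using that by simp
      thus ?thesis using w unfolding U_def by auto
    qed
    have "\<omega> \<in> blk M d r E n" if "n \<in> {K..}" for n
    proof -
      have kn: "K*d \<le> n*d" using that by simp
      have rr: "r \<le> d - r" "r < d" using rd by arith+
      have sd: "Suc n * d = n*d + d" by simp
      have "m \<le> n*d+r" "m \<le> n*d+(d-r)" "m \<le> Suc n*d" unfolding m_def sd
        using kn rr by linarith+
      thus ?thesis unfolding blk_eq using nE w by auto
    qed
    thus "\<omega> \<in> W K" unfolding W_def using w by auto
  qed
  have "prob (space M - U) \<le> A K" unfolding A_def
    by (rule finite_measure_mono[OF sub], rule G_ev'[OF _ W_G]) (use r1 in simp)
  moreover have "prob (space M - U) = 1 - prob U" using prob_compl[OF Uev] .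
  ultimately have "0 < A K" using PU by linarith
  thus ?thesis by blast
qed


lemma A0_pos: "0 < A 0"
proof -
  obtain K where K: "0 < A K" using A_pos_ex by blast
  have "0 < A (K - j)" for j
  proof (induction j)
    case 0 then show ?case using K by simp
  next
    case (Suc j)
    show ?case
    proof (cases "j < K")
      case True
      hence e: "K - j = Suc (K - Suc j)" by simp
      have le: "(1 - p ((K - Suc j)*d+(d-r))) * (1 - p (Suc (K - Suc j)*d)) * A (Suc (K - Suc j))
          \<le> A (K - Suc j)" by (rule rec(2))
      have pos: "0 < (1 - p ((K - Suc j)*d+(d-r))) * (1 - p (Suc (K - Suc j)*d))"
        using p_bounds(2)[of "(K - Suc j)*d+(d-r)"] p_bounds(2)[of "Suc (K - Suc j)*d"]
        by (intro mult_pos_pos) linarith+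
      have "0 < (1 - p ((K - Suc j)*d+(d-r))) * (1 - p (Suc (K - Suc j)*d)) * A (Suc (K - Suc j))"
        using Suc.IH e pos by simp
      then show ?thesis using le by linarith
    next
      case False
      hence "K - Suc j = K - j" by simp
      then show ?thesis using Suc.IH by simp
    qed
  qed
  from this[of K] show ?thesis by simp
qed

end



lemma aux1: "(a::real) \<noteq> 0 \<Longrightarrow> a / (a * (c * g)) = 1 / c * (1 / g)"
  by simp


lemma aux2: "(a::real) \<noteq> 0 \<Longrightarrow> b \<noteq> 0 \<Longrightarrow> c \<noteq> 0
   \<Longrightarrow> 1 / a * (1 / b * (1 / c * (A * (a * b * c * g)))) = A * g"
  by (simp add: field_simps)

theorem theorem4p1:
  fixes M :: "'a measure" and E :: "nat \<Rightarrow> 'a set" and q :: real and d r :: nat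
  assumes "prob_space M"
    and "0 < q" "q < 1"
    and "d \<ge> 3" "1 \<le> r" "2 * r < d"
    and "prob_space.indep_events M E {1..}"
    and "\<And>j. j \<ge> 1 \<Longrightarrow> measure M (E j) = q ^ j / (1 + q ^ j)"
  shows "cond_prob M (Uset M d r E) (Vset M d r E)
           = 1 / ((1 + q ^ r) * (1 + q ^ (d - r)) * (1 + q ^ d)) * (1 / g3 (- (q ^ r)) (q ^ d))
         \<and> cond_prob M ((space M - E r) \<inter> (space M - E (d - r)) \<inter> (space M - E d)) (Uset M d r E)
           = g3 (- (q ^ r)) (q ^ d)"
proof -
  interpret T: thm_setup M E q d r
    using assms by (intro thm_setup.intro thm_setup_axioms.intro) auto
  define x where "x = q ^ r"
  define y where "y = q ^ (d - r)"
  define Q where "Q = q ^ d"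
  have x0: "0 < x" and y0: "0 < y" and Q0: "0 < Q" using assms by (simp_all add: x_def y_def Q_def)
  have Qd: "Q = x * y"
  proof -
    have "r + (d - r) = d" using assms by simp
    hence "q ^ d = q ^ (r + (d - r))" by simp
    thus ?thesis unfolding Q_def x_def y_def by (simp add: power_add)
  qed
  have Q1: "Q < 1"
  proof -
    have "q ^ d \<le> q ^ 1" using assms by (intro power_decreasing) auto
    thus ?thesis using assms unfolding Q_def by simp
  qed
  have pw: "q ^ (k * d + j) = Q ^ k * q ^ j" for k j
    unfolding Q_def by (simp add: power_add power_mult[symmetric] mult.commute)
  have e1: "q ^ (k*d+r) = x * Q ^ k" for k using pw[of k r] by (simp add: x_def mult.commute)
  have e2: "q ^ (k*d+(d-r)) = y * Q ^ k" for k using pw[of k "d-r"] by (simp add: y_def mult.commute)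
  have e3: "q ^ (Suc k*d) = Q * Q ^ k" for k using pw[of "Suc k" 0] by simp
  have e4: "q ^ (Suc k*d+r) = x * (Q * Q ^ k)" for k using pw[of "Suc k" r] by (simp add: x_def mult.commute)
  have e5: "q ^ (Suc k*d+(d-r)) = y * (Q * Q ^ k)" for k
    using pw[of "Suc k" "d-r"] by (simp add: y_def mult.commute)
  have e6: "q ^ (Suc (Suc k)*d) = Q * (Q * Q ^ k)" for k using pw[of "Suc (Suc k)" 0] by simp
  define al where "al k = (1 - T.p (k*d+(d-r))) * (1 - T.p (Suc k*d))
      + (1 - T.p (k*d+r)) * T.p (k*d+(d-r)) * (1 - T.p (Suc k*d))" for k
  define ga where "ga k = (1 - T.p (k*d+r)) * (1 - T.p (k*d+(d-r))) * T.p (Suc k*d)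
        * ((1 - T.p (Suc k*d+r)) * (1 - T.p (Suc k*d+(d-r))) * (1 - T.p (Suc (Suc k)*d)))
      - (1 - T.p (k*d+r)) * T.p (k*d+(d-r)) * (1 - T.p (Suc k*d))
        * (T.p (Suc k*d+r) * (1 - T.p (Suc k*d+(d-r))) * (1 - T.p (Suc (Suc k)*d)))" for k
  have rA: "T.A k = al k * T.A (Suc k) + ga k * T.A (Suc (Suc k))" for k
    using T.rec(1)[of k] unfolding al_def ga_def by (simp add: algebra_simps)
  define Y where "Y k = Phi x y Q (Q ^ k) * rho Q k" for k
  have rY: "Y k = al k * Y (Suc k) + ga k * Y (Suc (Suc k))" for k
  proof -
    define Z where "Z = Q ^ k"
    have Z0: "0 \<le> Z" "Z \<le> 1" using Q0 Q1 by (simp_all add: Z_def power_le_one)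
    have c1: "al k * (1 + Q*Z) = (1+x*Z+y*Z)/((1+x*Z)*(1+y*Z))"
      unfolding al_def T.p_def e1[of k] e2[of k] e3[of k] Z_def[symmetric] by (rule coef1[OF Qd x0 y0 Z0(1)])
    have c2: "ga k * ((1 + Q*Z) * (1 + Q*(Q*Z)))
        = Q*Z*(1-Q*Z)/((1+x*Z)*(1+y*Z)*((1+x*(Q*Z))*(1+y*(Q*Z))))"
      unfolding ga_def T.p_def e1[of k] e2[of k] e3[of k] e4[of k] e5[of k] e6[of k] Z_def[symmetric] by (rule coef2[OF Qd x0 y0 Z0(1)])
    have fe: "Phi x y Q Z = (1+x*Z+y*Z)/((1+x*Z)*(1+y*Z)) * Phi x y Q (Q*Z)
       + Q*Z*(1-Q*Z)/((1+x*Z)*(1+y*Z)*((1+x*(Q*Z))*(1+y*(Q*Z)))) * Phi x y Q (Q*(Q*Z))"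
      by (rule FE[OF Qd x0 y0 Q1 Z0])
    have y1: "Y (Suc k) = Phi x y Q (Q*Z) * (rho Q k * (1 + Q*Z))"
      unfolding Y_def rho_Suc by (simp add: Z_def)
    have y2: "Y (Suc (Suc k)) = Phi x y Q (Q*(Q*Z)) * (rho Q k * (1 + Q*Z) * (1 + Q*(Q*Z)))"
      unfolding Y_def rho_Suc by (simp add: Z_def)
    have "al k * Y (Suc k) + ga k * Y (Suc (Suc k))
       = rho Q k * (Phi x y Q (Q*Z) * (al k * (1 + Q*Z)) + Phi x y Q (Q*(Q*Z)) * (ga k * ((1 + Q*Z) * (1 + Q*(Q*Z)))))"
      unfolding y1 y2 by (simp add: algebra_simps)
    also have "\<dots> = rho Q k * Phi x y Q Z" unfolding c1 c2 fe by (simp add: algebra_simps)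
    also have "\<dots> = Y k" by (simp add: Y_def Z_def)
    finally show ?thesis by simp
  qed
  have gb: "\<bar>ga k\<bar> \<le> 1/2" for k
  proof -
    note pb = T.p_bounds
    define t1 where "t1 = (1 - T.p (k*d+r)) * (1 - T.p (k*d+(d-r))) * T.p (Suc k*d)
        * ((1 - T.p (Suc k*d+r)) * (1 - T.p (Suc k*d+(d-r))) * (1 - T.p (Suc (Suc k)*d)))"
    define t2 where "t2 = (1 - T.p (k*d+r)) * T.p (k*d+(d-r)) * (1 - T.p (Suc k*d))
        * (T.p (Suc k*d+r) * (1 - T.p (Suc k*d+(d-r))) * (1 - T.p (Suc (Suc k)*d)))"
    have u: "0 \<le> 1 - T.p j" "1 - T.p j \<le> 1" for j using pb[of j] by auto
    have t1e: "t1 = T.p (Suc k*d) * ((1 - T.p (k*d+r)) * (1 - T.p (k*d+(d-r)))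
        * ((1 - T.p (Suc k*d+r)) * (1 - T.p (Suc k*d+(d-r))) * (1 - T.p (Suc (Suc k)*d))))"
      unfolding t1_def by (simp add: ac_simps)
    have t2e: "t2 = T.p (k*d+(d-r)) * ((1 - T.p (k*d+r)) * (1 - T.p (Suc k*d))
        * (T.p (Suc k*d+r) * (1 - T.p (Suc k*d+(d-r))) * (1 - T.p (Suc (Suc k)*d))))"
      unfolding t2_def by (simp add: ac_simps)
    have r1: "0 \<le> (1 - T.p (k*d+r)) * (1 - T.p (k*d+(d-r)))
        * ((1 - T.p (Suc k*d+r)) * (1 - T.p (Suc k*d+(d-r))) * (1 - T.p (Suc (Suc k)*d)))"
      "(1 - T.p (k*d+r)) * (1 - T.p (k*d+(d-r)))
        * ((1 - T.p (Suc k*d+r)) * (1 - T.p (Suc k*d+(d-r))) * (1 - T.p (Suc (Suc k)*d))) \<le> 1"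
      using u pb by (auto intro!: mult_nonneg_nonneg mult_le_one)
    have r2: "0 \<le> (1 - T.p (k*d+r)) * (1 - T.p (Suc k*d))
        * (T.p (Suc k*d+r) * (1 - T.p (Suc k*d+(d-r))) * (1 - T.p (Suc (Suc k)*d)))"
      "(1 - T.p (k*d+r)) * (1 - T.p (Suc k*d))
        * (T.p (Suc k*d+r) * (1 - T.p (Suc k*d+(d-r))) * (1 - T.p (Suc (Suc k)*d))) \<le> 1"
      using u pb[of "Suc k*d+r"] by (auto intro!: mult_nonneg_nonneg mult_le_one)
    have "0 \<le> t1" "t1 \<le> 1/2" unfolding t1e
      using r1 pb[of "Suc k*d"] mult_left_le[OF r1(2), of "T.p (Suc k*d)"] by auto
    moreover have "0 \<le> t2" "t2 \<le> 1/2" unfolding t2e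
      using r2 pb[of "k*d+(d-r)"] mult_left_le[OF r2(2), of "T.p (k*d+(d-r))"] by auto
    moreover have "ga k = t1 - t2" unfolding ga_def t1_def t2_def by simp
    ultimately show ?thesis by linarith
  qed
  define B where "B = 1 + suminf (domq Q) * exp (1 / (1 - Q))"
  have bA: "\<bar>T.A k\<bar> \<le> B" for k
  proof -
    have "0 \<le> suminf (domq Q) * exp (1 / (1 - Q))"
      using Phi_bounds[of Q 1 x y] Q0 Q1 x0 y0 by (intro mult_nonneg_nonneg) auto
    thus ?thesis using T.A_bounds[of k] unfolding B_def by simp
  qed
  have bY: "\<bar>Y k\<bar> \<le> B" for k
  proof -
    have z: "0 \<le> Q ^ k" "Q ^ k \<le> 1" using Q0 Q1 by (simp_all add: power_le_one)
    note pb = Phi_bounds[OF _ Q1 z, of x y] and rb = rho_bound[OF _ Q1, of k]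
    have "Y k \<le> suminf (domq Q) * exp (1 / (1 - Q))" unfolding Y_def
      using pb rb Q0 x0 y0 by (intro mult_mono) auto
    moreover have "0 \<le> Y k" unfolding Y_def using pb rb Q0 x0 y0 by simp
    ultimately show ?thesis unfolding B_def by simp
  qed
  have wr: "T.A 0 * Y 1 = T.A 1 * Y 0"
    by (rule wronskian[where A="T.A" and Y=Y and al=al and ga=ga and B=B, OF rA rY gb bA bY])
  define g where "g = g3 (- x) Q"
  note PQ = Phi_Q[OF Qd x0 y0 Q1]
  have Y0: "Y 0 = 1" by (simp add: Y_def Phi_one rho_def)
  have Y1: "Y 1 = (1 + x) * (1 + y) * g * (1 + Q)" by (simp add: Y_def rho_def PQ(1) g_def)
  have A0: "0 < T.A 0" by (rule T.A0_pos)
  have gpos: "0 < g"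
  proof -
    have "0 < (1 + x) * (1 + y) * g" using PQ unfolding g_def by simp
    moreover have "0 < (1 + x) * (1 + y)" using x0 y0 by simp
    ultimately show ?thesis by (rule zero_less_mult_pos)
  qed
  have A1: "T.A 1 = T.A 0 * ((1 + x) * (1 + y) * (1 + Q) * g)" using wr Y0 Y1 by (simp add: ac_simps)
  have Ueq: "Uset M d r E = T.W 0" unfolding Uset_def T.W_def by simp
  have Veq: "Vset M d r E = T.W 1" unfolding Vset_def T.W_def by simp
  have UV: "T.W 0 \<inter> T.W 1 = T.W 0" using T.W_step[of 0] by auto
  have c: "0 < (1 + x) * (1 + y) * (1 + Q)" using x0 y0 Q0 by simp
  have part1: "cond_prob M (Uset M d r E) (Vset M d r E)
      = 1 / ((1 + x) * (1 + y) * (1 + Q)) * (1 / g)"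
  proof -
    have "cond_prob M (Uset M d r E) (Vset M d r E) = T.A 0 / T.A 1"
      unfolding cond_prob_def Ueq Veq UV T.A_def by (rule refl)
    also have "\<dots> = T.A 0 / (T.A 0 * ((1 + x) * (1 + y) * (1 + Q) * g))" by (simp only: A1)
    also have "\<dots> = 1 / ((1 + x) * (1 + y) * (1 + Q)) * (1 / g)" using A0 by (intro aux1) simp
    finally show ?thesis .
  qed
  have pF: "1 - T.p j = 1 / (1 + q ^ j)" for j
  proof -
    have "0 < 1 + q ^ j" using assms by (simp add: add_pos_nonneg)
    thus ?thesis by (simp add: T.p_def field_simps)
  qed
  have fff: "(space M - E r) \<inter> (space M - E (d - r)) \<inter> (space M - E d) \<inter> Uset M d r E
      = (space M - E (0*d+r)) \<inter> ((space M - E (0*d+(d-r))) \<inter> (space M - E (Suc 0*d))) \<inter> T.W 0"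
    unfolding Ueq by auto
  have part2: "cond_prob M ((space M - E r) \<inter> (space M - E (d - r)) \<inter> (space M - E d)) (Uset M d r E) = g"
  proof -
    have "measure M ((space M - E r) \<inter> (space M - E (d - r)) \<inter> (space M - E d) \<inter> Uset M d r E)
       = (1 - T.p r) * ((1 - T.p (d - r)) * ((1 - T.p d) * T.A 1))"
      unfolding fff T.rec(3)[of 0] by simp
    also have "\<dots> = T.A 0 * g" unfolding pF A1 x_def[symmetric] y_def[symmetric] Q_def[symmetric]
      by (rule aux2) (use x0 y0 Q0 in auto)
    finally show ?thesis unfolding cond_prob_def Ueq[symmetric] T.A_def[symmetric] using A0
      by (simp add: Ueq T.A_def)
  qed
  show ?thesis using part1 part2 unfolding g_def x_def y_def Q_def by (rule conjI)
qed

end
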